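(* Let $X$ be a compact complex manifold of complex dimension $n$ and let $g(t)$, $t\in[0,t_0]$, be a smooth family of Hermitian metrics on $X$ solving $$\partial_t g_{\bar kj}=-\tilde R_{\bar kj}-\tfrac12 T_{\bar kpq}\bar T_j{}^{pq}-\Phi(z,g(t))_{\bar kj}.$$ Let $\hat g=g(0)$ and $h^\alpha{}_\beta=\hat g^{\alpha\bar\gamma}g_{\bar\gamma\beta}$. Then $$(\partial_t-\Delta)\,\mathrm{Tr}\,h=-g^{q\bar p}(h^{-1})^\gamma{}_\mu\,\hat\nabla_q h^\mu{}_j\,\hat\nabla_{\bar p}h^j{}_\gamma-g^{q\bar p}\hat R_{\bar pq}{}^\alpha{}_j h^j{}_\alpha-\tfrac12\hat g^{j\bar k}T_{\bar kpq}\bar T_j{}^{pq}-\hat g^{j\bar k}\Phi_{\bar kj}.$$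
   Context: In local holomorphic coordinates a Hermitian metric is $\omega=i g_{\bar kj}dz^j\wedge d\bar z^k$ with inverse $g^{j\bar k}$. Its Chern connection $\nabla$ has Christoffel symbols $\Gamma^p_{jq}=g^{p\bar\alpha}\partial_j g_{\bar\alpha q}$, curvature $R_{\bar kj}{}^p{}_q=-\partial_{\bar k}\Gamma^p_{jq}$, second Chern–Ricci curvature $\tilde R_{\bar pq}=g_{\bar p\ell}g^{j\bar k}R_{\bar kj}{}^\ell{}_q$, and torsion $T^m{}_{jp}=g^{m\bar q}(\partial_jg_{\bar qp}-\partial_pg_{\bar qj})$; we set $T_{\bar kpq}=g_{\bar km}T^m{}_{pq}$ and $\bar T_j{}^{pq}=g^{p\bar a}g^{q\bar b}\overline{T_{\bar jab}}$. All these quantities in the flow are those of $g(t)$. $\Phi$ is a given smooth assignment of a real $(1,1)$-form $\Phi(z,g)$ (components $\Phi_{\bar kj}$) to each point $z\in X$ and each positive definite Hermitian form $g$ at $z$; in the formula $\Phi=\Phi(z,g(t))$. $\Delta=g^{p\bar q}\partial_p\partial_{\bar q}$ on functions (with $g=g(t)$). $\hat\nabla$ and $\hat R$ denote the Chern connection and Chern curvature of $\hat g$, with $\hat\nabla$ acting on the endomorphism $h$. *)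

theory Defs
  imports "HOL-Analysis.Analysis"
begin

coinductive smooth_on :: "'a::real_normed_vector set \<Rightarrow> ('a \<Rightarrow> 'b::real_normed_vector) \<Rightarrow> bool"
  where "(\<forall>x\<in>S. f differentiable (at x within S)) \<Longrightarrow>
         (\<forall>v. smooth_on S (\<lambda>x. frechet_derivative f (at x within S) v)) \<Longrightarrow> smooth_on S f"

text \<open>Matrices are indexed G \$ k \$ j = g_{bar k j}.\<close>
definition hermitian_mat :: "complex^'n^'n \<Rightarrow> bool" where
  "hermitian_mat A \<longleftrightarrow> (\<forall>k j. cnj (A $ k $ j) = A $ j $ k)"

definition pos_def_herm :: "complex^'n^'n \<Rightarrow> bool" where
  "pos_def_herm A \<longleftrightarrow> hermitian_mat A \<and>
     (\<forall>v::complex^'n. v \<noteq> 0 \<longrightarrow> 0 < Re (\<Sum>k\<in>UNIV. \<Sum>j\<in>UNIV. cnj (v $ k) * A $ k $ j * v $ j))"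

definition herm_part :: "complex^'n^'n \<Rightarrow> complex^'n^'n" where
  "herm_part A = (\<chi> k j. (A $ k $ j + cnj (A $ j $ k)) / 2)"

definition dpart :: "complex^'n \<Rightarrow> (complex^'n \<Rightarrow> complex) \<Rightarrow> complex^'n \<Rightarrow> complex" where
  "dpart v f z = vector_derivative (\<lambda>s::real. f (z + s *\<^sub>R v)) (at 0)"

definition wd :: "'n \<Rightarrow> (complex^'n \<Rightarrow> complex) \<Rightarrow> complex^'n \<Rightarrow> complex" where
  "wd j f z = (dpart (axis j 1) f z - \<i> * dpart (axis j \<i>) f z) / 2"

definition wdb :: "'n \<Rightarrow> (complex^'n \<Rightarrow> complex) \<Rightarrow> complex^'n \<Rightarrow> complex" where
  "wdb k f z = (dpart (axis k 1) f z + \<i> * dpart (axis k \<i>) f z) / 2"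

text \<open>Geometric quantities of a Hermitian metric G (a function of z).
  ginv G z \$ j \$ k = g^{j bar k}.\<close>
definition ginv :: "(complex^'n \<Rightarrow> complex^'n^'n) \<Rightarrow> complex^'n \<Rightarrow> complex^'n^'n" where
  "ginv G z = matrix_inv (G z)"

text \<open>Christoffel symbols Gamma^p_{jq} = g^{p bar a} d_j g_{bar a q}.\<close>
definition chr :: "(complex^'n \<Rightarrow> complex^'n^'n) \<Rightarrow> 'n \<Rightarrow> 'n \<Rightarrow> 'n \<Rightarrow> complex^'n \<Rightarrow> complex" where
  "chr G p j q z = (\<Sum>a\<in>UNIV. ginv G z $ p $ a * wd j (\<lambda>w. G w $ a $ q) z)"

text \<open>Chern curvature R_{bar k j}^p_q = - d_{bar k} Gamma^p_{jq}.\<close>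
definition curv :: "(complex^'n \<Rightarrow> complex^'n^'n) \<Rightarrow> 'n \<Rightarrow> 'n \<Rightarrow> 'n \<Rightarrow> 'n \<Rightarrow> complex^'n \<Rightarrow> complex" where
  "curv G k j p q z = - wdb k (\<lambda>w. chr G p j q w) z"

text \<open>Second Chern-Ricci curvature tilde R_{bar p q} = g_{bar p l} g^{j bar k} R_{bar k j}^l_q.\<close>
definition ricci2 :: "(complex^'n \<Rightarrow> complex^'n^'n) \<Rightarrow> 'n \<Rightarrow> 'n \<Rightarrow> complex^'n \<Rightarrow> complex" where
  "ricci2 G p q z = (\<Sum>l\<in>UNIV. \<Sum>j\<in>UNIV. \<Sum>k\<in>UNIV.
      G z $ p $ l * ginv G z $ j $ k * curv G k j l q z)"

text \<open>Torsion T^m_{jp} = g^{m bar q}(d_j g_{bar q p} - d_p g_{bar q j}).\<close>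
definition torsion_up :: "(complex^'n \<Rightarrow> complex^'n^'n) \<Rightarrow> 'n \<Rightarrow> 'n \<Rightarrow> 'n \<Rightarrow> complex^'n \<Rightarrow> complex" where
  "torsion_up G m j p z = (\<Sum>q\<in>UNIV. ginv G z $ m $ q *
      (wd j (\<lambda>w. G w $ q $ p) z - wd p (\<lambda>w. G w $ q $ j) z))"

text \<open>T_{bar k p q} = g_{bar k m} T^m_{pq}.\<close>
definition torsion_low :: "(complex^'n \<Rightarrow> complex^'n^'n) \<Rightarrow> 'n \<Rightarrow> 'n \<Rightarrow> 'n \<Rightarrow> complex^'n \<Rightarrow> complex" where
  "torsion_low G k p q z = (\<Sum>m\<in>UNIV. G z $ k $ m * torsion_up G m p q z)"

text \<open>bar T_j^{pq} = g^{p bar a} g^{q bar b} conj(T_{bar j a b}).\<close>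
definition torsion_bar_up :: "(complex^'n \<Rightarrow> complex^'n^'n) \<Rightarrow> 'n \<Rightarrow> 'n \<Rightarrow> 'n \<Rightarrow> complex^'n \<Rightarrow> complex" where
  "torsion_bar_up G j p q z = (\<Sum>a\<in>UNIV. \<Sum>b\<in>UNIV.
      ginv G z $ p $ a * ginv G z $ q $ b * cnj (torsion_low G j a b z))"

definition TT :: "(complex^'n \<Rightarrow> complex^'n^'n) \<Rightarrow> 'n \<Rightarrow> 'n \<Rightarrow> complex^'n \<Rightarrow> complex" where
  "TT G k j z = (\<Sum>p\<in>UNIV. \<Sum>q\<in>UNIV. torsion_low G k p q z * torsion_bar_up G j p q z)"

definition lap :: "(complex^'n \<Rightarrow> complex^'n^'n) \<Rightarrow> (complex^'n \<Rightarrow> complex) \<Rightarrow> complex^'n \<Rightarrow> complex" where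
  "lap G f z = (\<Sum>p\<in>UNIV. \<Sum>q\<in>UNIV. ginv G z $ p $ q * wd p (\<lambda>w. wdb q f w) z)"

text \<open>Chern connection of Ghat acting on an endomorphism H (H \$ mu \$ j = h^mu_j):
  (1,0) part nabla_q h^mu_j = d_q h^mu_j + Gamma^mu_{qr} h^r_j - Gamma^r_{qj} h^mu_r,
  (0,1) part nabla_{bar p} h^j_g = d_{bar p} h^j_g.\<close>
definition nabla_end :: "(complex^'n \<Rightarrow> complex^'n^'n) \<Rightarrow> (complex^'n \<Rightarrow> complex^'n^'n)
    \<Rightarrow> 'n \<Rightarrow> 'n \<Rightarrow> 'n \<Rightarrow> complex^'n \<Rightarrow> complex" where
  "nabla_end Gh H q mu j z = wd q (\<lambda>w. H w $ mu $ j) z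
      + (\<Sum>r\<in>UNIV. chr Gh mu q r z * H z $ r $ j)
      - (\<Sum>r\<in>UNIV. chr Gh r q j z * H z $ mu $ r)"

definition nablabar_end :: "(complex^'n \<Rightarrow> complex^'n^'n)
    \<Rightarrow> 'n \<Rightarrow> 'n \<Rightarrow> 'n \<Rightarrow> complex^'n \<Rightarrow> complex" where
  "nablabar_end H p j g z = wdb p (\<lambda>w. H w $ j $ g) z"

end

theory Submission
  imports Defs
begin

lemma real_path_deriv:
  fixes f :: "'a::real_normed_vector \<Rightarrow> 'b::real_normed_vector"
  assumes "(f has_derivative Df) (at (z + s *\<^sub>R u))"
  shows "((\<lambda>s. f (z + s *\<^sub>R u)) has_vector_derivative Df u) (at s)"
proof -
  have l: "linear Df" using assms has_derivative_linear by blast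
  have "((\<lambda>s. z + s *\<^sub>R u) has_derivative (\<lambda>s. s *\<^sub>R u)) (at s)"
    by (auto intro!: derivative_eq_intros)
  from diff_chain_at[OF this assms]
  have "((\<lambda>s. f (z + s *\<^sub>R u)) has_derivative (\<lambda>s. Df (s *\<^sub>R u))) (at s)"
    by (simp add: o_def)
  then show ?thesis unfolding has_vector_derivative_def
    using linear_scale[OF l] by simp
qed

lemma dpart_eq:
  assumes "(f has_derivative Df) (at z)"
  shows "dpart v f z = Df v"
proof -
  have "((\<lambda>s. f (z + s *\<^sub>R v)) has_vector_derivative Df v) (at 0)"
    by (rule real_path_deriv) (use assms in simp)
  then show ?thesis unfolding dpart_def by (rule vector_derivative_at)
qed

lemma schwarz_real:
  fixes f :: "'a::real_normed_vector \<Rightarrow> real"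
  assumes U: "open U" "z \<in> U"
    and Df: "\<And>w. w \<in> U \<Longrightarrow> (f has_derivative Df w) (at w)"
    and Du: "\<And>w. w \<in> U \<Longrightarrow> ((\<lambda>w. Df w u) has_derivative Du w) (at w)"
    and Dv: "\<And>w. w \<in> U \<Longrightarrow> ((\<lambda>w. Df w v) has_derivative Dv w) (at w)"
    and cu: "continuous_on U (\<lambda>w. Du w v)"
    and cv: "continuous_on U (\<lambda>w. Dv w u)"
  shows "Du z v = Dv z u"
proof (rule ccontr)
  assume ne: "Du z v \<noteq> Dv z u"
  define e where "e = \<bar>Du z v - Dv z u\<bar> / 2"
  have e: "e > 0" using ne by (simp add: e_def)
  obtain r where r: "r > 0" "ball z r \<subseteq> U" using U openE by blast
  have "continuous (at z) (\<lambda>w. Du w v)" using cu U continuous_on_eq_continuous_at by blast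
  then obtain d1 where d1: "d1 > 0" "\<And>w. dist w z < d1 \<Longrightarrow> dist (Du w v) (Du z v) < e"
    using e unfolding continuous_at_eps_delta by blast
  have "continuous (at z) (\<lambda>w. Dv w u)" using cv U continuous_on_eq_continuous_at by blast
  then obtain d2 where d2: "d2 > 0" "\<And>w. dist w z < d2 \<Longrightarrow> dist (Dv w u) (Dv z u) < e"
    using e unfolding continuous_at_eps_delta by blast
  define m where "m = min r (min d1 d2)"
  have m: "m > 0" "m \<le> r" "m \<le> d1" "m \<le> d2" using r d1 d2 by (auto simp: m_def)
  define h where "h = m / (2 * (norm u + norm v + 1))"
  have dpos: "0 < norm u + norm v + 1" by (simp add: add_nonneg_pos)
  have h: "h > 0" unfolding h_def using m(1) dpos by (intro divide_pos_pos) auto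
  have hb: "h * (norm u + norm v) < m"
  proof -
    have "h * (norm u + norm v) < h * (2 * (norm u + norm v + 1))"
      using h by (intro mult_strict_left_mono) (auto simp: add_pos_nonneg add_nonneg_pos)
    also have "\<dots> = m" unfolding h_def using dpos by simp
    finally show ?thesis .
  qed
  have inball: "z + a *\<^sub>R u + b *\<^sub>R v \<in> ball z m" if "0 \<le> a" "a \<le> h" "0 \<le> b" "b \<le> h" for a b
  proof -
    have "norm (a *\<^sub>R u + b *\<^sub>R v) \<le> norm (a *\<^sub>R u) + norm (b *\<^sub>R v)"
      by (rule norm_triangle_ineq)
    also have "\<dots> = a * norm u + b * norm v" using that by simp
    also have "\<dots> \<le> h * norm u + h * norm v"
      using that by (intro add_mono mult_right_mono) auto
    also have "\<dots> < m" using hb by (simp add: algebra_simps)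
    finally have "norm (a *\<^sub>R u + b *\<^sub>R v) < m" .
    moreover have "dist z (z + a *\<^sub>R u + b *\<^sub>R v) = norm (a *\<^sub>R u + b *\<^sub>R v)"
      by (metis add.assoc add_diff_cancel_left' dist_commute dist_norm)
    ultimately show ?thesis by simp
  qed
  have inU: "z + a *\<^sub>R u + b *\<^sub>R v \<in> U" if "0 \<le> a" "a \<le> h" "0 \<le> b" "b \<le> h" for a b
    using inball[OF that] m r by auto
  define Dl where "Dl = f (z + h *\<^sub>R u + h *\<^sub>R v) - f (z + h *\<^sub>R u + 0 *\<^sub>R v)
      - f (z + 0 *\<^sub>R u + h *\<^sub>R v) + f (z + 0 *\<^sub>R u + 0 *\<^sub>R v)"
  have gen: "\<exists>a b. 0 \<le> a \<and> a \<le> h \<and> 0 \<le> b \<and> b \<le> h \<and>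
      f (z + h *\<^sub>R x + h *\<^sub>R y) - f (z + h *\<^sub>R x + 0 *\<^sub>R y)
      - f (z + 0 *\<^sub>R x + h *\<^sub>R y) + f (z + 0 *\<^sub>R x + 0 *\<^sub>R y) = h * h * Dx (z + a *\<^sub>R x + b *\<^sub>R y) y"
    if xy: "\<And>a b. 0 \<le> a \<Longrightarrow> a \<le> h \<Longrightarrow> 0 \<le> b \<Longrightarrow> b \<le> h \<Longrightarrow> z + a *\<^sub>R x + b *\<^sub>R y \<in> U"
      and Dx: "\<And>w. w \<in> U \<Longrightarrow> ((\<lambda>w. Df w x) has_derivative Dx w) (at w)"
    for x y Dx
  proof -
    define \<psi> where "\<psi> s = f (z + s *\<^sub>R x + h *\<^sub>R y) - f (z + s *\<^sub>R x + 0 *\<^sub>R y)" for s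
    have "DERIV \<psi> s :> (Df (z + s *\<^sub>R x + h *\<^sub>R y) x - Df (z + s *\<^sub>R x + 0 *\<^sub>R y) x)"
      if "0 \<le> s" "s \<le> h" for s
    proof -
      have p1: "z + s *\<^sub>R x + h *\<^sub>R y \<in> U" using xy[of s h] that h by simp
      have p2: "z + s *\<^sub>R x + 0 *\<^sub>R y \<in> U" using xy[of s 0] that h by simp
      have e1: "(z + h *\<^sub>R y) + s *\<^sub>R x = z + s *\<^sub>R x + h *\<^sub>R y" by (simp add: algebra_simps)
      have e2: "(z + 0 *\<^sub>R y) + s *\<^sub>R x = z + s *\<^sub>R x + 0 *\<^sub>R y" by (simp add: algebra_simps)
      have 1: "((\<lambda>s. f ((z + h *\<^sub>R y) + s *\<^sub>R x)) has_vector_derivative Df (z + s *\<^sub>R x + h *\<^sub>R y) x) (at s)"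
        by (rule real_path_deriv) (simp only: e1 Df[OF p1])
      have 2: "((\<lambda>s. f ((z + 0 *\<^sub>R y) + s *\<^sub>R x)) has_vector_derivative Df (z + s *\<^sub>R x + 0 *\<^sub>R y) x) (at s)"
        by (rule real_path_deriv) (simp only: e2 Df[OF p2])
      have "((\<lambda>s. f ((z + h *\<^sub>R y) + s *\<^sub>R x) - f ((z + 0 *\<^sub>R y) + s *\<^sub>R x)) has_vector_derivative
          (Df (z + s *\<^sub>R x + h *\<^sub>R y) x - Df (z + s *\<^sub>R x + 0 *\<^sub>R y) x)) (at s)"
        by (rule has_vector_derivative_diff[OF 1 2])
      then show ?thesis unfolding \<psi>_def has_real_derivative_iff_has_vector_derivative
        by (simp add: algebra_simps)
    qed
    from MVT2[OF h this]
    obtain a where a: "0 < a" "a < h"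
      "\<psi> h - \<psi> 0 = (h - 0) * (Df (z + a *\<^sub>R x + h *\<^sub>R y) x - Df (z + a *\<^sub>R x + 0 *\<^sub>R y) x)"
      by blast
    define kk where "kk b = Df (z + a *\<^sub>R x + b *\<^sub>R y) x" for b
    have "DERIV kk b :> Dx (z + a *\<^sub>R x + b *\<^sub>R y) y" if "0 \<le> b" "b \<le> h" for b
    proof -
      have "((\<lambda>b. Df ((z + a *\<^sub>R x) + b *\<^sub>R y) x) has_vector_derivative Dx (z + a *\<^sub>R x + b *\<^sub>R y) y) (at b)"
        by (rule real_path_deriv[where f="\<lambda>w. Df w x"]) (use Dx xy that a in simp)
      then show ?thesis unfolding kk_def has_real_derivative_iff_has_vector_derivative by simp
    qed
    from MVT2[OF h this]
    obtain b where b: "0 < b" "b < h" "kk h - kk 0 = (h - 0) * Dx (z + a *\<^sub>R x + b *\<^sub>R y) y"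
      by blast
    show ?thesis
      apply (rule exI[of _ a], rule exI[of _ b])
      using a b unfolding \<psi>_def kk_def by (auto simp: algebra_simps)
  qed
  obtain a1 b1 where ab1: "0 \<le> a1" "a1 \<le> h" "0 \<le> b1" "b1 \<le> h"
      "Dl = h * h * Du (z + a1 *\<^sub>R u + b1 *\<^sub>R v) v"
    using gen[of u v Du] inU Du unfolding Dl_def by blast
  obtain a2 b2 where ab2: "0 \<le> a2" "a2 \<le> h" "0 \<le> b2" "b2 \<le> h"
      "Dl = h * h * Dv (z + a2 *\<^sub>R v + b2 *\<^sub>R u) u"
  proof -
    have "\<exists>a b. 0 \<le> a \<and> a \<le> h \<and> 0 \<le> b \<and> b \<le> h \<and>
      f (z + h *\<^sub>R v + h *\<^sub>R u) - f (z + h *\<^sub>R v + 0 *\<^sub>R u)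
      - f (z + 0 *\<^sub>R v + h *\<^sub>R u) + f (z + 0 *\<^sub>R v + 0 *\<^sub>R u) = h * h * Dv (z + a *\<^sub>R v + b *\<^sub>R u) u"
    proof (rule gen)
      show "z + a *\<^sub>R v + b *\<^sub>R u \<in> U" if "0 \<le> a" "a \<le> h" "0 \<le> b" "b \<le> h" for a b
        using inU[OF that(3,4,1,2)] by (simp add: algebra_simps)
    qed (rule Dv)
    then show ?thesis using that unfolding Dl_def by (auto simp: algebra_simps)
  qed
  have eq: "Du (z + a1 *\<^sub>R u + b1 *\<^sub>R v) v = Dv (z + a2 *\<^sub>R v + b2 *\<^sub>R u) u"
    using ab1(5) ab2(5) h by simp
  have p1: "dist (z + a1 *\<^sub>R u + b1 *\<^sub>R v) z < d1"
    using inball[OF ab1(1-4)] m by (simp add: dist_commute)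
  have p2: "dist (z + b2 *\<^sub>R u + a2 *\<^sub>R v) z < d2"
    using inball[OF ab2(3,4,1,2)] m by (simp add: dist_commute)
  have "\<bar>Du z v - Dv z u\<bar> < e + e"
    using d1(2)[OF p1] d2(2)[OF p2] eq unfolding dist_real_def
    by (simp add: algebra_simps)
  then show False unfolding e_def by simp
qed

lemma schwarz:
  fixes f :: "complex^'n \<Rightarrow> complex"
  assumes U: "open U" "z \<in> U"
    and Df: "\<And>w. w \<in> U \<Longrightarrow> (f has_derivative Df w) (at w)"
    and Du: "\<And>w. w \<in> U \<Longrightarrow> ((\<lambda>w. Df w u) has_derivative Du w) (at w)"
    and Dv: "\<And>w. w \<in> U \<Longrightarrow> ((\<lambda>w. Df w v) has_derivative Dv w) (at w)"
    and cu: "continuous_on U (\<lambda>w. Du w v)"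
    and cv: "continuous_on U (\<lambda>w. Dv w u)"
  shows "Du z v = Dv z u"
proof (rule complex_eqI)
  show "Re (Du z v) = Re (Dv z u)"
    by (rule schwarz_real[where f="\<lambda>w. Re (f w)" and Df="\<lambda>w h. Re (Df w h)"
          and Du="\<lambda>w h. Re (Du w h)" and Dv="\<lambda>w h. Re (Dv w h)", OF U])
      (use Df Du Dv cu cv in \<open>auto intro!: has_derivative_Re continuous_intros\<close>)
  show "Im (Du z v) = Im (Dv z u)"
    by (rule schwarz_real[where f="\<lambda>w. Im (f w)" and Df="\<lambda>w h. Im (Df w h)"
          and Du="\<lambda>w h. Im (Du w h)" and Dv="\<lambda>w h. Im (Dv w h)", OF U])
      (use Df Du Dv cu cv in \<open>auto intro!: has_derivative_Im continuous_intros\<close>)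
qed

definition C2 :: "'a::real_normed_vector set \<Rightarrow> ('a \<Rightarrow> complex) \<Rightarrow> bool" where
  "C2 U f \<longleftrightarrow> (\<exists>Df D2. (\<forall>w\<in>U. (f has_derivative Df w) (at w)) \<and>
     (\<forall>w\<in>U. \<forall>u. ((\<lambda>w. Df w u) has_derivative D2 w u) (at w)) \<and>
     (\<forall>u v. continuous_on U (\<lambda>w. D2 w u v)))"

lemma C2_diff: "C2 U f \<Longrightarrow> w \<in> U \<Longrightarrow> f differentiable (at w)"
  unfolding C2_def differentiable_def by blast

lemma C2_dpart_diff:
  assumes "C2 U f" "open U" "w \<in> U"
  shows "(\<lambda>w. dpart v f w) differentiable (at w)"
proof -
  obtain Df D2 where D: "\<forall>w\<in>U. (f has_derivative Df w) (at w)"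
     "\<forall>w\<in>U. \<forall>u. ((\<lambda>w. Df w u) has_derivative D2 w u) (at w)"
    using assms(1) unfolding C2_def by blast
  have "((\<lambda>w. dpart v f w) has_derivative D2 w v) (at w)"
    by (rule has_derivative_transform_within_open[OF D(2)[rule_format, OF assms(3)] assms(2,3)])
       (use D(1) in \<open>auto intro!: dpart_eq[symmetric]\<close>)
  then show ?thesis unfolding differentiable_def by blast
qed

lemma C2_swap:
  assumes "C2 U f" "open U" "z \<in> U"
  shows "dpart u (\<lambda>w. dpart v f w) z = dpart v (\<lambda>w. dpart u f w) z"
proof -
  obtain Df D2 where D: "\<forall>w\<in>U. (f has_derivative Df w) (at w)"
     "\<forall>w\<in>U. \<forall>u. ((\<lambda>w. Df w u) has_derivative D2 w u) (at w)"
     "\<forall>u v. continuous_on U (\<lambda>w. D2 w u v)"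
    using assms(1) unfolding C2_def by blast
  have h: "((\<lambda>w. dpart x f w) has_derivative D2 z x) (at z)" for x
    by (rule has_derivative_transform_within_open[OF D(2)[rule_format, OF assms(3)] assms(2,3)])
       (use D(1) in \<open>auto intro!: dpart_eq[symmetric]\<close>)
  have "dpart u (\<lambda>w. dpart v f w) z = D2 z v u" by (rule dpart_eq[OF h])
  also have "\<dots> = D2 z u v"
    by (rule schwarz[OF assms(2,3), where Df=Df and Du="\<lambda>w. D2 w v" and Dv="\<lambda>w. D2 w u"])
       (use D in auto)
  also have "\<dots> = dpart v (\<lambda>w. dpart u f w) z" by (rule dpart_eq[OF h, symmetric])
  finally show ?thesis .
qed

subsection \<open>Generic Wirtinger-type operators\<close>

definition dop :: "complex^'n \<Rightarrow> complex^'n \<Rightarrow> complex \<Rightarrow> (complex^'n \<Rightarrow> complex) \<Rightarrow> complex^'n \<Rightarrow> complex" where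
  "dop a b c f z = (dpart a f z + c * dpart b f z) / 2"

lemma wd_dop: "wd j = dop (axis j 1) (axis j \<i>) (- \<i>)"
  by (intro ext) (simp add: wd_def dop_def)

lemma wdb_dop: "wdb j = dop (axis j 1) (axis j \<i>) \<i>"
  by (intro ext) (simp add: wdb_def dop_def)

lemma dpart_mult:
  fixes f g :: "complex^'n \<Rightarrow> complex"
  assumes "f differentiable (at z)" "g differentiable (at z)"
  shows "dpart v (\<lambda>w. f w * g w) z = dpart v f z * g z + f z * dpart v g z"
proof -
  obtain f' g' where fg: "(f has_derivative f') (at z)" "(g has_derivative g') (at z)"
    using assms unfolding differentiable_def by blast
  have "((\<lambda>w. f w * g w) has_derivative (\<lambda>h. f z * g' h + f' h * g z)) (at z)"
    by (rule has_derivative_mult[OF fg])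
  note h = dpart_eq[OF this]
  show ?thesis by (simp add: dpart_eq[OF fg(1)] dpart_eq[OF fg(2)] h)
qed

lemma dpart_add:
  fixes f g :: "complex^'n \<Rightarrow> complex"
  assumes "f differentiable (at z)" "g differentiable (at z)"
  shows "dpart v (\<lambda>w. f w + g w) z = dpart v f z + dpart v g z"
proof -
  obtain f' g' where fg: "(f has_derivative f') (at z)" "(g has_derivative g') (at z)"
    using assms unfolding differentiable_def by blast
  have "((\<lambda>w. f w + g w) has_derivative (\<lambda>h. f' h + g' h)) (at z)"
    by (rule has_derivative_add[OF fg])
  note h = dpart_eq[OF this]
  show ?thesis by (simp add: dpart_eq[OF fg(1)] dpart_eq[OF fg(2)] h)
qed

lemma dpart_const: "dpart v (\<lambda>w. c) z = 0"
  by (rule dpart_eq[where Df="\<lambda>_. 0", simplified]) (rule has_derivative_const)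

lemma dpart_cong:
  fixes f g :: "complex^'n \<Rightarrow> complex"
  assumes "open U" "z \<in> U" "\<And>w. w \<in> U \<Longrightarrow> f w = g w" "f differentiable (at z)"
  shows "dpart v f z = dpart v g z"
proof -
  obtain f' where f: "(f has_derivative f') (at z)"
    using assms unfolding differentiable_def by blast
  have g: "(g has_derivative f') (at z)"
    by (rule has_derivative_transform_within_open[OF f assms(1,2)]) (use assms in auto)
  show ?thesis using dpart_eq[OF f] dpart_eq[OF g] by simp
qed

lemma dop_mult:
  fixes f g :: "complex^'n \<Rightarrow> complex"
  assumes "f differentiable (at z)" "g differentiable (at z)"
  shows "dop a b c (\<lambda>w. f w * g w) z = dop a b c f z * g z + f z * dop a b c g z"
  unfolding dop_def dpart_mult[OF assms] by (simp add: field_simps)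

lemma dop_add:
  fixes f g :: "complex^'n \<Rightarrow> complex"
  assumes "f differentiable (at z)" "g differentiable (at z)"
  shows "dop a b c (\<lambda>w. f w + g w) z = dop a b c f z + dop a b c g z"
  unfolding dop_def dpart_add[OF assms] by (simp add: field_simps)

lemma dop_const: "dop a b c (\<lambda>w. k) z = 0"
  unfolding dop_def dpart_const by simp

lemma dop_cong:
  fixes f g :: "complex^'n \<Rightarrow> complex"
  assumes "open U" "z \<in> U" "\<And>w. w \<in> U \<Longrightarrow> f w = g w" "f differentiable (at z)"
  shows "dop a b c f z = dop a b c g z"
  unfolding dop_def using dpart_cong[OF assms] by simp

lemma dop_sum:
  fixes f :: "'i \<Rightarrow> complex^'n \<Rightarrow> complex"
  assumes "finite I" "\<And>i. i \<in> I \<Longrightarrow> f i differentiable (at z)"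
  shows "dop a b c (\<lambda>w. \<Sum>i\<in>I. f i w) z = (\<Sum>i\<in>I. dop a b c (f i) z)"
  using assms
proof (induction I rule: finite_induct)
  case empty
  then show ?case by (simp add: dop_const)
next
  case (insert x F)
  have "dop a b c (\<lambda>w. \<Sum>i\<in>insert x F. f i w) z = dop a b c (\<lambda>w. f x w + (\<Sum>i\<in>F. f i w)) z"
    using insert by simp
  also have "\<dots> = dop a b c (f x) z + dop a b c (\<lambda>w. \<Sum>i\<in>F. f i w) z"
    by (rule dop_add) (use insert in \<open>auto intro!: differentiable_sum\<close>)
  finally show ?case using insert by simp
qed

lemma dop_cmult:
  fixes f :: "complex^'n \<Rightarrow> complex"
  assumes "f differentiable (at z)"
  shows "dop a b c (\<lambda>w. k * f w) z = k * dop a b c f z"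
  using dop_mult[of "\<lambda>w. k" z f a b c] assms by (simp add: dop_const)

lemma dop_diff:
  fixes f g :: "complex^'n \<Rightarrow> complex"
  assumes "f differentiable (at z)" "g differentiable (at z)"
  shows "dop a b c (\<lambda>w. f w - g w) z = dop a b c f z - dop a b c g z"
proof -
  have "dop a b c (\<lambda>w. f w + (-1) * g w) z = dop a b c f z + dop a b c (\<lambda>w. (-1) * g w) z"
    by (rule dop_add) (use assms in auto)
  then show ?thesis using dop_cmult[OF assms(2), of a b c "-1"] by simp
qed

lemma dop_minus:
  fixes f :: "complex^'n \<Rightarrow> complex"
  assumes "f differentiable (at z)"
  shows "dop a b c (\<lambda>w. - f w) z = - dop a b c f z"
  using dop_cmult[OF assms, of a b c "-1"] by simp

lemma dop_diffable:
  assumes "C2 U f" "open U" "w \<in> U"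
  shows "(\<lambda>w. dop a b c f w) differentiable (at w)"
  unfolding dop_def
  by (intro differentiable_divide differentiable_add differentiable_mult differentiable_const
      C2_dpart_diff[OF assms]) auto

lemma dop_swap:
  assumes "C2 U f" "open U" "z \<in> U"
  shows "dop a b c (\<lambda>w. dop a' b' c' f w) z = dop a' b' c' (\<lambda>w. dop a b c f w) z"
proof -
  have d: "\<And>v. (\<lambda>w. dpart v f w) differentiable (at z)"
    using C2_dpart_diff[OF assms] .
  have e: "dpart x (\<lambda>w. dop a' b' c' f w) z = (dpart x (\<lambda>w. dpart a' f w) z + c' * dpart x (\<lambda>w. dpart b' f w) z) / 2" for x
  proof -
    have "dpart x (\<lambda>w. (dpart a' f w + c' * dpart b' f w) * (1/2)) z
        = dpart x (\<lambda>w. dpart a' f w + c' * dpart b' f w) z * (1/2)"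
      by (subst dpart_mult) (use d in \<open>auto intro!: differentiable_add differentiable_mult simp: dpart_const\<close>)
    also have "\<dots> = (dpart x (\<lambda>w. dpart a' f w) z + c' * dpart x (\<lambda>w. dpart b' f w) z) / 2"
      by (subst dpart_add, (use d in \<open>auto intro!: differentiable_mult\<close>)[2],
          subst dpart_mult) (use d in \<open>auto simp: dpart_const\<close>)
    finally show ?thesis unfolding dop_def by simp
  qed
  have e': "dpart x (\<lambda>w. dop a b c f w) z = (dpart x (\<lambda>w. dpart a f w) z + c * dpart x (\<lambda>w. dpart b f w) z) / 2" for x
  proof -
    have "dpart x (\<lambda>w. (dpart a f w + c * dpart b f w) * (1/2)) z
        = dpart x (\<lambda>w. dpart a f w + c * dpart b f w) z * (1/2)"
      by (subst dpart_mult) (use d in \<open>auto intro!: differentiable_add differentiable_mult simp: dpart_const\<close>)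
    also have "\<dots> = (dpart x (\<lambda>w. dpart a f w) z + c * dpart x (\<lambda>w. dpart b f w) z) / 2"
      by (subst dpart_add, (use d in \<open>auto intro!: differentiable_mult\<close>)[2],
          subst dpart_mult) (use d in \<open>auto simp: dpart_const\<close>)
    finally show ?thesis unfolding dop_def by simp
  qed
  show ?thesis
    unfolding dop_def[of a b c "\<lambda>w. dop a' b' c' f w"] dop_def[of a' b' c' "\<lambda>w. dop a b c f w"] e e'
    unfolding C2_swap[OF assms, of a a'] C2_swap[OF assms, of a b'] C2_swap[OF assms, of b a'] C2_swap[OF assms, of b b']
    by (simp add: field_simps)
qed

lemma mm_entry: "(A ** B) $ i $ j = (\<Sum>k\<in>UNIV. A $ i $ k * B $ k $ j)"
  by (simp add: matrix_matrix_mult_def)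

lemma mm_rdistrib: "((A::'a::semiring_1^'n^'m) + B) ** C = A ** C + B ** C"
  by (simp add: vec_eq_iff mm_entry distrib_right sum.distrib)

lemma mm_ldistrib: "(A::'a::semiring_1^'n^'m) ** (B + C) = A ** B + A ** C"
  by (rule matrix_add_ldistrib)

lemma mm_diff_r: "((A::'a::ring_1^'n^'m) - B) ** C = A ** C - B ** C"
  by (simp add: vec_eq_iff mm_entry left_diff_distrib sum_subtractf)

lemma mm_diff_l: "(A::'a::ring_1^'n^'m) ** (B - C) = A ** B - A ** C"
  by (simp add: vec_eq_iff mm_entry right_diff_distrib sum_subtractf)

lemma mm_neg_l: "(- (A::'a::ring_1^'n^'m)) ** B = - (A ** B)"
  by (simp add: vec_eq_iff mm_entry sum_negf)

lemma mm_neg_r: "(A::'a::ring_1^'n^'m) ** (- B) = - (A ** B)"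
  by (simp add: vec_eq_iff mm_entry sum_negf)

lemma trace_neg: "trace (- (A::'a::comm_ring_1^'n^'n)) = - trace A"
  by (simp add: trace_def sum_negf)

lemma matrix_inv_props:
  fixes A :: "'a::field^'n^'n"
  assumes "invertible A"
  shows "A ** matrix_inv A = mat 1" "matrix_inv A ** A = mat 1"
  using someI_ex[OF assms[unfolded invertible_def]] unfolding matrix_inv_def by auto

lemma inv_cramer:
  fixes A :: "'a::field^'n^'n"
  assumes "det A \<noteq> 0"
  shows "matrix_inv A = (\<chi> k j. det (\<chi> i l. if l = k then axis j 1 $ i else A $ i $ l) / det A)"
proof -
  have inv: "invertible A" using assms invertible_det_nz by blast
  have "matrix_inv A $ k $ j = det (\<chi> i l. if l = k then axis j 1 $ i else A $ i $ l) / det A" for k j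
  proof -
    have "A *v (matrix_inv A *v axis j 1) = axis j 1"
      by (simp add: matrix_vector_mul_assoc matrix_inv_props[OF inv])
    then have "matrix_inv A *v axis j 1 = (\<chi> k. det (\<chi> i l. if l = k then axis j 1 $ i else A $ i $ l) / det A)"
      using cramer[OF assms] by blast
    then have "(matrix_inv A *v axis j 1) $ k = det (\<chi> i l. if l = k then axis j 1 $ i else A $ i $ l) / det A"
      by simp
    moreover have "(matrix_inv A *v axis j 1) $ k = matrix_inv A $ k $ j"
      by (simp add: matrix_vector_mult_def axis_def if_distrib cong: if_cong)
    ultimately show ?thesis by simp
  qed
  then show ?thesis by (simp add: vec_eq_iff)
qed

subsection \<open>Matrix-valued operators\<close>

definition MOP :: "complex^'n \<Rightarrow> complex^'n \<Rightarrow> complex \<Rightarrow> (complex^'n \<Rightarrow> complex^'n^'n) \<Rightarrow> complex^'n \<Rightarrow> complex^'n^'n" where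
  "MOP a b c M z = (\<chi> i j. dop a b c (\<lambda>w. M w $ i $ j) z)"

definition mdiff :: "complex^'n \<Rightarrow> (complex^'n \<Rightarrow> complex^'n^'n) \<Rightarrow> bool" where
  "mdiff z M \<longleftrightarrow> (\<forall>i j. (\<lambda>w. M w $ i $ j) differentiable (at z))"

lemma MOP_entry: "MOP a b c M z $ i $ j = dop a b c (\<lambda>w. M w $ i $ j) z"
  by (simp add: MOP_def)

lemma mdiffD: "mdiff z M \<Longrightarrow> (\<lambda>w. M w $ i $ j) differentiable (at z)"
  by (simp add: mdiff_def)

lemma mdiff_mult: "mdiff z M \<Longrightarrow> mdiff z N \<Longrightarrow> mdiff z (\<lambda>w. M w ** N w)"
  unfolding mdiff_def mm_entry by (auto intro!: differentiable_sum differentiable_mult)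

lemma mdiff_add: "mdiff z M \<Longrightarrow> mdiff z N \<Longrightarrow> mdiff z (\<lambda>w. M w + N w)"
  unfolding mdiff_def by (auto intro!: differentiable_add)

lemma mdiff_diff: "mdiff z M \<Longrightarrow> mdiff z N \<Longrightarrow> mdiff z (\<lambda>w. M w - N w)"
  unfolding mdiff_def by (auto intro!: differentiable_diff)

lemma mdiff_neg: "mdiff z M \<Longrightarrow> mdiff z (\<lambda>w. - M w)"
  unfolding mdiff_def by (auto intro!: differentiable_minus)

lemma mdiff_const: "mdiff z (\<lambda>w. K)"
  unfolding mdiff_def by auto

lemma MOP_mult:
  assumes "mdiff z M" "mdiff z N"
  shows "MOP a b c (\<lambda>w. M w ** N w) z = MOP a b c M z ** N z + M z ** MOP a b c N z"
proof -
  have "dop a b c (\<lambda>w. \<Sum>k\<in>UNIV. M w $ i $ k * N w $ k $ j) z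
      = (\<Sum>k\<in>UNIV. dop a b c (\<lambda>w. M w $ i $ k) z * N z $ k $ j + M z $ i $ k * dop a b c (\<lambda>w. N w $ k $ j) z)"
    for i j
    using assms unfolding mdiff_def
    by (subst dop_sum) (auto intro!: differentiable_mult dop_mult sum.cong)
  then show ?thesis
    by (simp add: vec_eq_iff MOP_entry mm_entry sum.distrib)
qed

lemma MOP_add:
  assumes "mdiff z M" "mdiff z N"
  shows "MOP a b c (\<lambda>w. M w + N w) z = MOP a b c M z + MOP a b c N z"
  using assms unfolding mdiff_def by (simp add: vec_eq_iff MOP_entry dop_add)

lemma MOP_diff:
  assumes "mdiff z M" "mdiff z N"
  shows "MOP a b c (\<lambda>w. M w - N w) z = MOP a b c M z - MOP a b c N z"
  using assms unfolding mdiff_def by (simp add: vec_eq_iff MOP_entry dop_diff)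

lemma MOP_neg:
  assumes "mdiff z M"
  shows "MOP a b c (\<lambda>w. - M w) z = - MOP a b c M z"
  using assms unfolding mdiff_def by (simp add: vec_eq_iff MOP_entry dop_minus)

lemma MOP_const: "MOP a b c (\<lambda>w. K) z = 0"
  by (simp add: vec_eq_iff MOP_entry dop_const)

lemma MOP_trace:
  assumes "mdiff z M"
  shows "dop a b c (\<lambda>w. trace (M w)) z = trace (MOP a b c M z)"
  using assms unfolding mdiff_def trace_def
  by (subst dop_sum) (auto simp: MOP_entry)

lemma MOP_cong:
  assumes "open U" "z \<in> U" "\<And>w. w \<in> U \<Longrightarrow> M w = N w" "mdiff z M"
  shows "MOP a b c M z = MOP a b c N z"
proof -
  have "dop a b c (\<lambda>w. M w $ i $ j) z = dop a b c (\<lambda>w. N w $ i $ j) z" for i j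
    by (rule dop_cong[OF assms(1,2)]) (use assms(3,4) in \<open>auto simp: mdiff_def\<close>)
  then show ?thesis by (simp add: vec_eq_iff MOP_entry)
qed

lemma mdiff_cong:
  assumes "open U" "z \<in> U" "\<And>w. w \<in> U \<Longrightarrow> M w = N w" "mdiff z M"
  shows "mdiff z N"
  unfolding mdiff_def
proof (intro allI)
  fix i j
  obtain D where "((\<lambda>w. M w $ i $ j) has_derivative D) (at z)"
    using assms(4) unfolding mdiff_def differentiable_def by blast
  then have "((\<lambda>w. N w $ i $ j) has_derivative D) (at z)"
    by (rule has_derivative_transform_within_open[OF _ assms(1,2)]) (use assms(3) in auto)
  then show "(\<lambda>w. N w $ i $ j) differentiable (at z)" unfolding differentiable_def by blast
qed

lemma differentiable_prod':
  fixes f :: "'i \<Rightarrow> 'a::real_normed_vector \<Rightarrow> complex"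
  assumes "finite I" "\<And>i. i \<in> I \<Longrightarrow> f i differentiable (at z)"
  shows "(\<lambda>w. \<Prod>i\<in>I. f i w) differentiable (at z)"
  using assms by (induction I rule: finite_induct) (auto intro!: differentiable_mult)

lemma det_differentiable:
  fixes M :: "complex^'n \<Rightarrow> complex^'n^'n"
  assumes "mdiff z M"
  shows "(\<lambda>w. det (M w)) differentiable (at z)"
  unfolding det_def
proof (rule differentiable_sum)
  show "finite {p. p permutes (UNIV::'n set)}" by (rule finite_permutations) simp
  show "\<forall>p\<in>{p. p permutes (UNIV::'n set)}. (\<lambda>w. of_int (sign p) * (\<Prod>i\<in>UNIV. M w $ i $ p i)) differentiable (at z)"
  proof
    fix p
    have "(\<lambda>w. \<Prod>i\<in>UNIV. M w $ i $ p i) differentiable (at z)"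
      by (rule differentiable_prod') (use assms in \<open>auto simp: mdiff_def\<close>)
    then show "(\<lambda>w. of_int (sign p) * (\<Prod>i\<in>UNIV. M w $ i $ p i)) differentiable (at z)"
      by (intro differentiable_mult differentiable_const)
  qed
qed

lemma mdiff_inv:
  assumes "open U" "z \<in> U" "\<And>w. w \<in> U \<Longrightarrow> invertible (M w)" "mdiff z M"
  shows "mdiff z (\<lambda>w. matrix_inv (M w))"
proof -
  define C where "C w = (\<chi> k j. det (\<chi> i l. if l = k then axis j 1 $ i else M w $ i $ l) / det (M w))" for w
  have dz: "det (M z) \<noteq> 0" using assms(2,3) invertible_det_nz by blast
  have "mdiff z C"
    unfolding mdiff_def
  proof (intro allI)
    fix k j
    have md: "mdiff z (\<lambda>w. \<chi> i l. if l = k then axis j 1 $ i else M w $ i $ l)"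
      unfolding mdiff_def
    proof (intro allI)
      fix i l
      show "(\<lambda>w. (\<chi> i l. if l = k then axis j 1 $ i else M w $ i $ l) $ i $ l) differentiable (at z)"
        using assms(4) unfolding mdiff_def by (cases "l = k") auto
    qed
    then have "(\<lambda>w. det (\<chi> i l. if l = k then axis j 1 $ i else M w $ i $ l) / det (M w)) differentiable (at z)"
      using differentiable_divide[OF det_differentiable[OF md] det_differentiable[OF assms(4)]] dz
      by simp
    then show "(\<lambda>w. C w $ k $ j) differentiable (at z)"
      unfolding C_def by simp
  qed
  moreover have "C w = matrix_inv (M w)" if "w \<in> U" for w
  proof -
    have "det (M w) \<noteq> 0" using assms(3)[OF that] invertible_det_nz by blast
    from inv_cramer[OF this] show ?thesis unfolding C_def by simp
  qed
  ultimately show ?thesis by (rule mdiff_cong[OF assms(1,2), of C, rotated]) (auto)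
qed

lemma MOP_inv:
  assumes "open U" "z \<in> U" "\<And>w. w \<in> U \<Longrightarrow> invertible (M w)" "mdiff z M"
  shows "MOP a b c (\<lambda>w. matrix_inv (M w)) z = - (matrix_inv (M z) ** MOP a b c M z ** matrix_inv (M z))"
proof -
  let ?Mi = "matrix_inv (M z)" and ?D = "MOP a b c (\<lambda>w. matrix_inv (M w)) z"
  have di: "mdiff z (\<lambda>w. matrix_inv (M w))" by (rule mdiff_inv[OF assms])
  have "MOP a b c (\<lambda>w. matrix_inv (M w) ** M w) z = MOP a b c (\<lambda>w. mat 1) z"
    by (rule MOP_cong[OF assms(1,2)]) (use assms(3) matrix_inv_props mdiff_mult[OF di assms(4)] in auto)
  then have "?D ** M z + ?Mi ** MOP a b c M z = 0"
    using MOP_mult[OF di assms(4)] MOP_const by metis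
  then have "?D ** M z = - (?Mi ** MOP a b c M z)"
    by (simp add: eq_neg_iff_add_eq_0)
  then have "?D ** M z ** ?Mi = - (?Mi ** MOP a b c M z) ** ?Mi" by simp
  then show ?thesis
    using matrix_inv_props[OF assms(3)[OF assms(2)]]
    by (simp add: matrix_mul_assoc[symmetric] mm_neg_l)
qed

lemma smooth_onD:
  assumes "smooth_on S f"
  shows "\<forall>x\<in>S. f differentiable (at x within S)"
    "\<forall>v. smooth_on S (\<lambda>x. frechet_derivative f (at x within S) v)"
  using assms by (auto elim: smooth_on.cases)

lemma smooth_on_cont:
  assumes "smooth_on S f"
  shows "continuous_on S f"
  using smooth_onD(1)[OF assms] differentiable_imp_continuous_within continuous_on_eq_continuous_within
  by blast

lemma slice_deriv:
  fixes F :: "real \<times> 'a::real_normed_vector \<Rightarrow> 'b::real_normed_vector"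
  assumes "(F has_derivative F') (at (t, w) within T \<times> U)" "open U" "w \<in> U" "t \<in> T"
  shows "((\<lambda>w. F (t, w)) has_derivative (\<lambda>u. F' (0, u))) (at w)"
proof -
  have p: "((\<lambda>w. (t, w)) has_derivative (\<lambda>u. (0, u))) (at w within U)"
    by (auto intro!: derivative_eq_intros)
  have "(F has_derivative F') (at (t, w) within (\<lambda>w. (t, w)) ` U)"
    by (rule has_derivative_subset[OF assms(1)]) (use assms(4) in auto)
  from diff_chain_within[OF p this]
  have "((\<lambda>w. F (t, w)) has_derivative (\<lambda>u. F' (0, u))) (at w within U)"
    by (simp add: o_def)
  then show ?thesis using at_within_open[OF assms(3,2)] by simp
qed

lemma has_derivative_entry:
  assumes "(M has_derivative M') F"
  shows "((\<lambda>x. M x $ a $ b) has_derivative (\<lambda>h. M' h $ a $ b)) F"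
proof -
  have "((\<lambda>x. M x $ a) has_derivative (\<lambda>h. M' h $ a)) F"
    using bounded_linear.has_derivative[OF bounded_linear_vec_nth assms] .
  from bounded_linear.has_derivative[OF bounded_linear_vec_nth this] show ?thesis .
qed

lemma slice_cont:
  fixes F :: "real \<times> 'a::real_normed_vector \<Rightarrow> 'b::real_normed_vector"
  assumes "continuous_on (T \<times> U) F" "t \<in> T"
  shows "continuous_on U (\<lambda>w. F (t, w))"
  by (rule continuous_on_compose2[OF assms(1)]) (use assms(2) in \<open>auto intro!: continuous_intros\<close>)

definition goodM :: "(complex^'n) set \<Rightarrow> (complex^'n \<Rightarrow> complex^'n^'n) \<Rightarrow> bool" where
  "goodM U M \<longleftrightarrow> (\<forall>a b. C2 U (\<lambda>w. M w $ a $ b)) \<and> (\<forall>w\<in>U. invertible (M w))"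

lemma good_slice:
  fixes g :: "real \<Rightarrow> complex^'n \<Rightarrow> complex^'n^'n"
  assumes sm: "smooth_on (T \<times> U) (\<lambda>(t, z). g t z)" and U: "open U" and t: "t \<in> T"
  shows "C2 U (\<lambda>w. g t w $ a $ b)"
proof -
  define S where "S = T \<times> U"
  define F where "F = (\<lambda>(t, z). g t z)"
  define FD where "FD x = frechet_derivative F (at x within S)" for x
  define FD2 where "FD2 v x = frechet_derivative (\<lambda>x. FD x v) (at x within S)" for v x
  have s1: "smooth_on S F" using sm unfolding S_def F_def .
  have d1: "(F has_derivative FD x) (at x within S)" if "x \<in> S" for x
    using smooth_onD(1)[OF s1] that frechet_derivative_works unfolding FD_def by blast
  have s2: "smooth_on S (\<lambda>x. FD x v)" for v
    using smooth_onD(2)[OF s1] unfolding FD_def by blast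
  have d2: "((\<lambda>x. FD x v) has_derivative FD2 v x) (at x within S)" if "x \<in> S" for x v
    using smooth_onD(1)[OF s2] that frechet_derivative_works unfolding FD2_def by blast
  have s3: "smooth_on S (\<lambda>x. FD2 v x v')" for v v'
    using smooth_onD(2)[OF s2] unfolding FD2_def by blast
  have c3: "continuous_on S (\<lambda>x. FD2 v x v')" for v v'
    by (rule smooth_on_cont[OF s3])
  show ?thesis
    unfolding C2_def
  proof (intro exI conjI ballI allI)
    fix w assume w: "w \<in> U"
    have "((\<lambda>w. F (t, w)) has_derivative (\<lambda>u. FD (t, w) (0, u))) (at w)"
      by (rule slice_deriv[OF _ U w t]) (use d1 w t in \<open>auto simp: S_def\<close>)
    then show "((\<lambda>w. g t w $ a $ b) has_derivative (\<lambda>u. FD (t, w) (0, u) $ a $ b)) (at w)"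
      unfolding F_def using has_derivative_entry by fastforce
  next
    fix w u assume w: "w \<in> U"
    have "((\<lambda>w. FD (t, w) (0, u)) has_derivative (\<lambda>v. FD2 (0, u) (t, w) (0, v))) (at w)"
      by (rule slice_deriv[OF _ U w t, where F="\<lambda>x. FD x (0, u)"]) (use d2 w t in \<open>auto simp: S_def\<close>)
    then show "((\<lambda>w. FD (t, w) (0, u) $ a $ b) has_derivative (\<lambda>v. FD2 (0, u) (t, w) (0, v) $ a $ b)) (at w)"
      by (rule has_derivative_entry)
  next
    fix u v
    have "continuous_on U (\<lambda>w. FD2 (0, u) (t, w) (0, v))"
      by (rule slice_cont[OF c3[unfolded S_def] t])
    then show "continuous_on U (\<lambda>w. FD2 (0, u) (t, w) (0, v) $ a $ b)"
      by (intro continuous_intros)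
  qed
qed

lemma posdef_invertible:
  fixes A :: "complex^'n^'n"
  assumes "pos_def_herm A"
  shows "invertible A"
proof -
  have "x = 0" if "A *v x = 0" for x
  proof (rule ccontr)
    assume "x \<noteq> 0"
    then have pos: "0 < Re (\<Sum>k\<in>UNIV. \<Sum>j\<in>UNIV. cnj (x $ k) * A $ k $ j * x $ j)"
      using assms unfolding pos_def_herm_def by blast
    have "(\<Sum>k\<in>UNIV. \<Sum>j\<in>UNIV. cnj (x $ k) * A $ k $ j * x $ j) = (\<Sum>k\<in>UNIV. cnj (x $ k) * (A *v x) $ k)"
      by (simp add: matrix_vector_mult_def sum_distrib_left mult.assoc)
    also have "\<dots> = 0" using that by simp
    finally show False using pos by simp
  qed
  then show ?thesis
    unfolding invertible_left_inverse matrix_left_invertible_ker by blast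
qed

lemma key_alg:
  fixes A Ai G Gi DqA BpA DqG BpG A2 A2' G2 G2' :: "complex^'n^'n"
  assumes AAi: "A ** Ai = mat 1" and AiA: "Ai ** A = mat 1"
    and GGi: "G ** Gi = mat 1" and GiG: "Gi ** G = mat 1"
    and A2: "A2 = A2'" and G2: "G2 = G2'"
  shows
  "trace (Ai ** (BpG ** (Gi ** DqG) - G2')) +
   trace (((- (((- (Ai ** DqA ** Ai)) ** BpA + Ai ** A2) ** Ai
                 + (Ai ** BpA) ** (- (Ai ** DqA ** Ai)))) ** G
              + (- (Ai ** BpA ** Ai)) ** DqG)
             + ((- (Ai ** DqA ** Ai)) ** BpG + Ai ** G2))
   = trace ((Gi ** A) ** ((- (Ai ** DqA ** Ai)) ** G + Ai ** DqG + (Ai ** DqA) ** (Ai ** G) - (Ai ** G) ** (Ai ** DqA))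
        ** ((- (Ai ** BpA ** Ai)) ** G + Ai ** BpG))
   + trace ((Ai ** (BpA ** (Ai ** DqA)) - Ai ** A2') ** (Ai ** G))"
proof -
  have c1: "A ** (Ai ** X) = X" for X using AAi by (simp add: matrix_mul_assoc)
  have c2: "Ai ** (A ** X) = X" for X using AiA by (simp add: matrix_mul_assoc)
  have c3: "G ** (Gi ** X) = X" for X using GGi by (simp add: matrix_mul_assoc)
  have c4: "Gi ** (G ** X) = X" for X using GiG by (simp add: matrix_mul_assoc)
  have cyc1: "trace (Ai ** (BpG ** (Gi ** DqG))) = trace (Gi ** (DqG ** (Ai ** BpG)))"
    using trace_mul_sym[of "Ai ** BpG" "Gi ** DqG"] by (simp add: matrix_mul_assoc)
  have cyc2: "trace (Gi ** (DqG ** (Ai ** (BpA ** (Ai ** G))))) = trace (Ai ** (BpA ** (Ai ** DqG)))"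
  proof -
    have "trace (Gi ** (DqG ** (Ai ** (BpA ** (Ai ** G))))) = trace ((Gi ** (DqG ** (Ai ** (BpA ** Ai)))) ** G)"
      by (simp add: matrix_mul_assoc)
    also have "\<dots> = trace (G ** (Gi ** (DqG ** (Ai ** (BpA ** Ai)))))" by (rule trace_mul_sym)
    also have "\<dots> = trace (DqG ** (Ai ** (BpA ** Ai)))" by (simp add: c3)
    also have "\<dots> = trace ((Ai ** (BpA ** Ai)) ** DqG)" by (rule trace_mul_sym)
    finally show ?thesis by (simp add: matrix_mul_assoc)
  qed
  show ?thesis
    unfolding A2 G2
    by (simp add: mm_ldistrib mm_rdistrib mm_diff_l mm_diff_r mm_neg_l mm_neg_r
        matrix_mul_assoc[symmetric] trace_add trace_sub trace_neg c1 c2 c3 c4 cyc1 cyc2 algebra_simps)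
qed

abbreviation Dw :: "'n \<Rightarrow> (complex^'n \<Rightarrow> complex^'n^'n) \<Rightarrow> complex^'n \<Rightarrow> complex^'n^'n" where
  "Dw j \<equiv> MOP (axis j 1) (axis j \<i>) (- \<i>)"
abbreviation Bw :: "'n \<Rightarrow> (complex^'n \<Rightarrow> complex^'n^'n) \<Rightarrow> complex^'n \<Rightarrow> complex^'n^'n" where
  "Bw j \<equiv> MOP (axis j 1) (axis j \<i>) \<i>"

lemma Dw_entry: "Dw j M z $ a $ b = wd j (\<lambda>w. M w $ a $ b) z"
  by (simp add: MOP_entry wd_dop)
lemma Bw_entry: "Bw j M z $ a $ b = wdb j (\<lambda>w. M w $ a $ b) z"
  by (simp add: MOP_entry wdb_dop)

lemma chr_mat: "chr M p j q w = (matrix_inv (M w) ** Dw j M w) $ p $ q"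
  by (simp add: chr_def ginv_def mm_entry Dw_entry)

context
  fixes U :: "(complex^'n) set" and M :: "complex^'n \<Rightarrow> complex^'n^'n"
  assumes U: "open U" and gM: "goodM U M"
begin

lemma gm_mdiff: "w \<in> U \<Longrightarrow> mdiff w M"
  using gM C2_diff unfolding goodM_def mdiff_def by blast

lemma gm_mdiff_op: "w \<in> U \<Longrightarrow> mdiff w (\<lambda>w. MOP a b c M w)"
  using gM dop_diffable[OF _ U] unfolding goodM_def mdiff_def MOP_entry by blast

lemma gm_inv: "w \<in> U \<Longrightarrow> invertible (M w)"
  using gM unfolding goodM_def by blast

lemma gm_mdiff_inv: "w \<in> U \<Longrightarrow> mdiff w (\<lambda>w. matrix_inv (M w))"
  by (rule mdiff_inv[OF U _ gm_inv gm_mdiff])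

lemma gm_MOP_inv: "w \<in> U \<Longrightarrow> MOP a b c (\<lambda>w. matrix_inv (M w)) w
    = - (matrix_inv (M w) ** MOP a b c M w ** matrix_inv (M w))"
  by (rule MOP_inv[OF U _ gm_inv gm_mdiff])

lemma gm_swap: "w \<in> U \<Longrightarrow> MOP a b c (\<lambda>w. MOP a' b' c' M w) w = MOP a' b' c' (\<lambda>w. MOP a b c M w) w"
  using gM dop_swap[OF _ U] unfolding goodM_def by (simp add: vec_eq_iff MOP_entry)

lemma curv_mat:
  assumes z: "z \<in> U"
  shows "curv M k j p q z = (matrix_inv (M z) ** (Bw k M z ** (matrix_inv (M z) ** Dw j M z))
      - matrix_inv (M z) ** Bw k (\<lambda>w. Dw j M w) z) $ p $ q"
proof -
  have "curv M k j p q z = - wdb k (\<lambda>w. (matrix_inv (M w) ** Dw j M w) $ p $ q) z"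
    by (simp add: curv_def chr_mat)
  also have "\<dots> = - Bw k (\<lambda>w. matrix_inv (M w) ** Dw j M w) z $ p $ q"
    by (simp add: Bw_entry)
  also have "Bw k (\<lambda>w. matrix_inv (M w) ** Dw j M w) z
      = Bw k (\<lambda>w. matrix_inv (M w)) z ** Dw j M z + matrix_inv (M z) ** Bw k (\<lambda>w. Dw j M w) z"
    by (rule MOP_mult[OF gm_mdiff_inv[OF z] gm_mdiff_op[OF z]])
  finally show ?thesis
    by (simp add: gm_MOP_inv[OF z] mm_neg_l matrix_mul_assoc)
qed

lemma ricci_mat:
  assumes z: "z \<in> U"
  shows "ricci2 M p q z = (\<Sum>j\<in>UNIV. \<Sum>k\<in>UNIV. matrix_inv (M z) $ j $ k *
     (Bw k M z ** (matrix_inv (M z) ** Dw j M z) - Bw k (\<lambda>w. Dw j M w) z) $ p $ q)"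
proof -
  let ?Mi = "matrix_inv (M z)"
  let ?C = "\<lambda>k j. ?Mi ** (Bw k M z ** (?Mi ** Dw j M z)) - ?Mi ** Bw k (\<lambda>w. Dw j M w) z"
  have MMi: "M z ** ?Mi = mat 1" using matrix_inv_props[OF gm_inv[OF z]] by simp
  have MC: "M z ** ?C k j = Bw k M z ** (?Mi ** Dw j M z) - Bw k (\<lambda>w. Dw j M w) z" for k j
    by (simp add: mm_diff_l matrix_mul_assoc MMi)
  have "ricci2 M p q z = (\<Sum>l\<in>UNIV. \<Sum>j\<in>UNIV. \<Sum>k\<in>UNIV. M z $ p $ l * ?Mi $ j $ k * ?C k j $ l $ q)"
    by (simp add: ricci2_def ginv_def curv_mat[OF z])
  also have "\<dots> = (\<Sum>j\<in>UNIV. \<Sum>k\<in>UNIV. \<Sum>l\<in>UNIV. M z $ p $ l * ?Mi $ j $ k * ?C k j $ l $ q)"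
    by (rule trans[OF sum.swap], rule sum.cong[OF refl], rule sum.swap)
  also have "\<dots> = (\<Sum>j\<in>UNIV. \<Sum>k\<in>UNIV. ?Mi $ j $ k * (M z ** ?C k j) $ p $ q)"
    by (simp add: mm_entry sum_distrib_left mult_ac)
  finally show ?thesis by (simp only: MC)
qed

end

lemma matrix_inv_unique:
  fixes X Y :: "'a::field^'n^'n"
  assumes "X ** Y = mat 1"
  shows "matrix_inv X = Y"
proof -
  have inv: "invertible X" using assms invertible_right_inverse by blast
  have "Y = (matrix_inv X ** X) ** Y" using matrix_inv_props[OF inv] by simp
  also have "\<dots> = matrix_inv X" by (simp add: matrix_mul_assoc[symmetric] assms)
  finally show ?thesis by simp
qed

lemma trace2: "trace (X ** Y) = (\<Sum>a\<in>UNIV. \<Sum>j\<in>UNIV. X $ a $ j * Y $ j $ a)"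
  by (simp add: trace_def mm_entry)

lemma trace3: "trace (X ** Y ** Z) = (\<Sum>g\<in>UNIV. \<Sum>m\<in>UNIV. \<Sum>j\<in>UNIV. X $ g $ m * Y $ m $ j * Z $ j $ g)"
proof -
  have "trace (X ** Y ** Z) = (\<Sum>g\<in>UNIV. \<Sum>j\<in>UNIV. \<Sum>m\<in>UNIV. X $ g $ m * Y $ m $ j * Z $ j $ g)"
    by (simp add: trace_def mm_entry sum_distrib_right)
  also have "\<dots> = (\<Sum>g\<in>UNIV. \<Sum>m\<in>UNIV. \<Sum>j\<in>UNIV. X $ g $ m * Y $ m $ j * Z $ j $ g)"
    by (rule sum.cong[OF refl], rule sum.swap)
  finally show ?thesis .
qed

context
  fixes U :: "(complex^'n) set" and A G :: "complex^'n \<Rightarrow> complex^'n^'n"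
  assumes U: "open U" and gA: "goodM U A" and gG: "goodM U G"
begin

lemma wdb_trace:
  assumes w: "w \<in> U"
  shows "wdb p (\<lambda>w. trace (matrix_inv (A w) ** G w)) w
    = trace (- (matrix_inv (A w) ** Bw p A w ** matrix_inv (A w)) ** G w + matrix_inv (A w) ** Bw p G w)"
proof -
  have "wdb p (\<lambda>w. trace (matrix_inv (A w) ** G w)) w = trace (Bw p (\<lambda>w. matrix_inv (A w) ** G w) w)"
    unfolding wdb_dop
    by (rule MOP_trace, rule mdiff_mult[OF gm_mdiff_inv[OF U gA w] gm_mdiff[OF U gG w]])
  also have "Bw p (\<lambda>w. matrix_inv (A w) ** G w) w = Bw p (\<lambda>w. matrix_inv (A w)) w ** G w + matrix_inv (A w) ** Bw p G w"
    by (rule MOP_mult[OF gm_mdiff_inv[OF U gA w] gm_mdiff[OF U gG w]])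
  finally show ?thesis by (simp add: gm_MOP_inv[OF U gA w])
qed

lemma lap_term:
  assumes z: "z \<in> U"
  defines "Ai \<equiv> matrix_inv (A z)"
  shows "wd q (\<lambda>w. wdb p (\<lambda>w. trace (matrix_inv (A w) ** G w)) w) z
    = trace (((- (((- (Ai ** Dw q A z ** Ai)) ** Bw p A z + Ai ** Dw q (\<lambda>w. Bw p A w) z) ** Ai
                 + (Ai ** Bw p A z) ** (- (Ai ** Dw q A z ** Ai)))) ** G z
              + (- (Ai ** Bw p A z ** Ai)) ** Dw q G z)
             + ((- (Ai ** Dw q A z ** Ai)) ** Bw p G z + Ai ** Dw q (\<lambda>w. Bw p G w) z))"
proof -
  define Ai' where "Ai' w = matrix_inv (A w)" for w
  define P1 where "P1 w = Ai' w ** Bw p A w" for w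
  define P2 where "P2 w = P1 w ** Ai' w" for w
  define P3 where "P3 w = - P2 w" for w
  define P4 where "P4 w = P3 w ** G w" for w
  define P5 where "P5 w = Ai' w ** Bw p G w" for w
  define X where "X w = P4 w + P5 w" for w
  have mAi: "mdiff z Ai'" unfolding Ai'_def by (rule gm_mdiff_inv[OF U gA z])
  have mBA: "mdiff z (\<lambda>w. Bw p A w)" by (rule gm_mdiff_op[OF U gA z])
  have mBG: "mdiff z (\<lambda>w. Bw p G w)" by (rule gm_mdiff_op[OF U gG z])
  have mG: "mdiff z G" by (rule gm_mdiff[OF U gG z])
  have mP1: "mdiff z P1" unfolding P1_def by (rule mdiff_mult[OF mAi mBA])
  have mP2: "mdiff z P2" unfolding P2_def by (rule mdiff_mult[OF mP1 mAi])
  have mP3: "mdiff z P3" unfolding P3_def by (rule mdiff_neg[OF mP2])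
  have mP4: "mdiff z P4" unfolding P4_def by (rule mdiff_mult[OF mP3 mG])
  have mP5: "mdiff z P5" unfolding P5_def by (rule mdiff_mult[OF mAi mBG])
  have mX: "mdiff z X" unfolding X_def by (rule mdiff_add[OF mP4 mP5])
  have eqU: "trace (X w) = wdb p (\<lambda>w. trace (matrix_inv (A w) ** G w)) w" if "w \<in> U" for w
    unfolding wdb_trace[OF that] X_def P4_def P5_def P3_def P2_def P1_def Ai'_def ..
  have dX: "(\<lambda>w. trace (X w)) differentiable (at z)"
    using mX unfolding mdiff_def trace_def by (auto intro!: differentiable_sum)
  have "wd q (\<lambda>w. wdb p (\<lambda>w. trace (matrix_inv (A w) ** G w)) w) z = wd q (\<lambda>w. trace (X w)) z"
    unfolding wd_dop by (rule dop_cong[OF U z eqU dX, symmetric])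
  also have "\<dots> = trace (Dw q X z)" unfolding wd_dop by (rule MOP_trace[OF mX])
  also have "Dw q X z = Dw q P4 z + Dw q P5 z" unfolding X_def by (rule MOP_add[OF mP4 mP5])
  also have "Dw q P4 z = Dw q P3 z ** G z + P3 z ** Dw q G z" unfolding P4_def by (rule MOP_mult[OF mP3 mG])
  also have "Dw q P3 z = - Dw q P2 z" unfolding P3_def by (rule MOP_neg[OF mP2])
  also have "Dw q P2 z = Dw q P1 z ** Ai' z + P1 z ** Dw q Ai' z" unfolding P2_def by (rule MOP_mult[OF mP1 mAi])
  also have "Dw q P1 z = Dw q Ai' z ** Bw p A z + Ai' z ** Dw q (\<lambda>w. Bw p A w) z"
    unfolding P1_def by (rule MOP_mult[OF mAi mBA])
  also have "Dw q P5 z = Dw q Ai' z ** Bw p G z + Ai' z ** Dw q (\<lambda>w. Bw p G w) z"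
    unfolding P5_def by (rule MOP_mult[OF mAi mBG])
  also have "Dw q Ai' z = - (Ai ** Dw q A z ** Ai)"
    unfolding Ai'_def Ai_def by (rule gm_MOP_inv[OF U gA z])
  finally show ?thesis unfolding P3_def P2_def P1_def Ai'_def Ai_def by simp
qed

lemma nabla_mat:
  assumes z: "z \<in> U"
  defines "Ai \<equiv> matrix_inv (A z)"
  shows "nabla_end A (\<lambda>w. matrix_inv (A w) ** G w) q m j z
    = ((- (Ai ** Dw q A z ** Ai)) ** G z + Ai ** Dw q G z + (Ai ** Dw q A z) ** (Ai ** G z)
        - (Ai ** G z) ** (Ai ** Dw q A z)) $ m $ j"
proof -
  have "wd q (\<lambda>w. (matrix_inv (A w) ** G w) $ m $ j) z = Dw q (\<lambda>w. matrix_inv (A w) ** G w) z $ m $ j"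
    by (simp add: Dw_entry)
  also have "Dw q (\<lambda>w. matrix_inv (A w) ** G w) z = Dw q (\<lambda>w. matrix_inv (A w)) z ** G z + Ai ** Dw q G z"
    unfolding Ai_def by (rule MOP_mult[OF gm_mdiff_inv[OF U gA z] gm_mdiff[OF U gG z]])
  finally have 1: "wd q (\<lambda>w. (matrix_inv (A w) ** G w) $ m $ j) z
      = ((- (Ai ** Dw q A z ** Ai)) ** G z + Ai ** Dw q G z) $ m $ j"
    by (simp add: gm_MOP_inv[OF U gA z] Ai_def)
  have 2: "(\<Sum>r\<in>UNIV. chr A m q r z * (Ai ** G z) $ r $ j) = ((Ai ** Dw q A z) ** (Ai ** G z)) $ m $ j"
    by (simp add: chr_mat mm_entry Ai_def)
  have 3: "(\<Sum>r\<in>UNIV. chr A r q j z * (Ai ** G z) $ m $ r) = ((Ai ** G z) ** (Ai ** Dw q A z)) $ m $ j"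
  proof -
    have "((Ai ** G z) ** (Ai ** Dw q A z)) $ m $ j = (\<Sum>r\<in>UNIV. (Ai ** G z) $ m $ r * (Ai ** Dw q A z) $ r $ j)"
      by (rule mm_entry)
    then show ?thesis by (simp add: chr_mat Ai_def mult.commute)
  qed
  show ?thesis
    unfolding nabla_end_def 1 Ai_def[symmetric] using 2 3 by simp
qed

lemma nablabar_mat:
  assumes z: "z \<in> U"
  defines "Ai \<equiv> matrix_inv (A z)"
  shows "nablabar_end (\<lambda>w. matrix_inv (A w) ** G w) p j g z
    = ((- (Ai ** Bw p A z ** Ai)) ** G z + Ai ** Bw p G z) $ j $ g"
proof -
  have "nablabar_end (\<lambda>w. matrix_inv (A w) ** G w) p j g z = Bw p (\<lambda>w. matrix_inv (A w) ** G w) z $ j $ g"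
    by (simp add: nablabar_end_def Bw_entry)
  also have "Bw p (\<lambda>w. matrix_inv (A w) ** G w) z = Bw p (\<lambda>w. matrix_inv (A w)) z ** G z + Ai ** Bw p G z"
    unfolding Ai_def by (rule MOP_mult[OF gm_mdiff_inv[OF U gA z] gm_mdiff[OF U gG z]])
  finally show ?thesis by (simp add: gm_MOP_inv[OF U gA z] Ai_def)
qed

lemma sum4_swap:
  "(\<Sum>j\<in>I. \<Sum>k\<in>K. \<Sum>q\<in>Q. \<Sum>p\<in>P. f j k q p) = (\<Sum>q\<in>Q. \<Sum>p\<in>P. \<Sum>j\<in>I. \<Sum>k\<in>K. f j k q p)"
proof -
  have "(\<Sum>j\<in>I. \<Sum>k\<in>K. \<Sum>q\<in>Q. \<Sum>p\<in>P. f j k q p) = (\<Sum>j\<in>I. \<Sum>q\<in>Q. \<Sum>k\<in>K. \<Sum>p\<in>P. f j k q p)"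
    by (rule sum.cong[OF refl], rule sum.swap)
  also have "\<dots> = (\<Sum>j\<in>I. \<Sum>q\<in>Q. \<Sum>p\<in>P. \<Sum>k\<in>K. f j k q p)"
    by (rule sum.cong[OF refl], rule sum.cong[OF refl], rule sum.swap)
  also have "\<dots> = (\<Sum>q\<in>Q. \<Sum>j\<in>I. \<Sum>p\<in>P. \<Sum>k\<in>K. f j k q p)"
    by (rule sum.swap)
  also have "\<dots> = (\<Sum>q\<in>Q. \<Sum>p\<in>P. \<Sum>j\<in>I. \<Sum>k\<in>K. f j k q p)"
    by (rule sum.cong[OF refl], rule sum.swap)
  finally show ?thesis .
qed

lemma main_space:
  assumes z: "z \<in> U"
  shows "- (\<Sum>j\<in>UNIV. \<Sum>k\<in>UNIV. ginv A z $ j $ k * ricci2 G k j z)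
       - lap G (\<lambda>w. trace (matrix_inv (A w) ** G w)) z
     = - (\<Sum>q\<in>UNIV. \<Sum>p\<in>UNIV. \<Sum>g\<in>UNIV. \<Sum>m\<in>UNIV. \<Sum>j\<in>UNIV.
            ginv G z $ q $ p * matrix_inv (matrix_inv (A z) ** G z) $ g $ m
            * nabla_end A (\<lambda>w. matrix_inv (A w) ** G w) q m j z
            * nablabar_end (\<lambda>w. matrix_inv (A w) ** G w) p j g z)
       - (\<Sum>q\<in>UNIV. \<Sum>p\<in>UNIV. \<Sum>a\<in>UNIV. \<Sum>j\<in>UNIV.
            ginv G z $ q $ p * curv A p q a j z * (matrix_inv (A z) ** G z) $ j $ a)"
proof -
  define Ai where "Ai = matrix_inv (A z)"
  define Gi where "Gi = matrix_inv (G z)"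
  define R where "R q p = Bw p G z ** (Gi ** Dw q G z) - Bw p (\<lambda>w. Dw q G w) z" for q p
  define L where "L q p = ((- (((- (Ai ** Dw q A z ** Ai)) ** Bw p A z + Ai ** Dw q (\<lambda>w. Bw p A w) z) ** Ai
                 + (Ai ** Bw p A z) ** (- (Ai ** Dw q A z ** Ai)))) ** G z
              + (- (Ai ** Bw p A z ** Ai)) ** Dw q G z)
             + ((- (Ai ** Dw q A z ** Ai)) ** Bw p G z + Ai ** Dw q (\<lambda>w. Bw p G w) z)" for q p
  define N where "N q = (- (Ai ** Dw q A z ** Ai)) ** G z + Ai ** Dw q G z + (Ai ** Dw q A z) ** (Ai ** G z)
        - (Ai ** G z) ** (Ai ** Dw q A z)" for q
  define Nb where "Nb p = (- (Ai ** Bw p A z ** Ai)) ** G z + Ai ** Bw p G z" for p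
  define CA where "CA p q = Ai ** (Bw p A z ** (Ai ** Dw q A z)) - Ai ** Bw p (\<lambda>w. Dw q A w) z" for p q
  have AAi: "A z ** Ai = mat 1" "Ai ** A z = mat 1"
    using matrix_inv_props[OF gm_inv[OF U gA z]] unfolding Ai_def by auto
  have GGi: "G z ** Gi = mat 1" "Gi ** G z = mat 1"
    using matrix_inv_props[OF gm_inv[OF U gG z]] unfolding Gi_def by auto
  have Hinv: "matrix_inv (Ai ** G z) = Gi ** A z"
  proof (rule matrix_inv_unique)
    have "Ai ** G z ** (Gi ** A z) = Ai ** ((G z ** Gi) ** A z)" by (simp add: matrix_mul_assoc)
    then show "Ai ** G z ** (Gi ** A z) = mat 1" by (simp add: GGi AAi)
  qed
  have key: "trace (Ai ** R q p) + trace (L q p) = trace (Gi ** A z ** N q ** Nb p) + trace (CA p q ** (Ai ** G z))" for q p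
    unfolding R_def L_def N_def Nb_def CA_def
    by (rule key_alg[OF AAi GGi]) (simp_all add: gm_swap[OF U gA z] gm_swap[OF U gG z])
  have T1: "(\<Sum>j\<in>UNIV. \<Sum>k\<in>UNIV. ginv A z $ j $ k * ricci2 G k j z)
      = (\<Sum>q\<in>UNIV. \<Sum>p\<in>UNIV. Gi $ q $ p * trace (Ai ** R q p))"
  proof -
    have "(\<Sum>j\<in>UNIV. \<Sum>k\<in>UNIV. ginv A z $ j $ k * ricci2 G k j z)
        = (\<Sum>j\<in>UNIV. \<Sum>k\<in>UNIV. \<Sum>q\<in>UNIV. \<Sum>p\<in>UNIV. Gi $ q $ p * (Ai $ j $ k * R q p $ k $ j))"
      by (simp add: ricci_mat[OF U gG z] ginv_def R_def Ai_def Gi_def sum_distrib_left mult_ac)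
    also have "\<dots> = (\<Sum>q\<in>UNIV. \<Sum>p\<in>UNIV. \<Sum>j\<in>UNIV. \<Sum>k\<in>UNIV. Gi $ q $ p * (Ai $ j $ k * R q p $ k $ j))"
      by (rule sum4_swap)
    also have "\<dots> = (\<Sum>q\<in>UNIV. \<Sum>p\<in>UNIV. Gi $ q $ p * trace (Ai ** R q p))"
      by (simp add: trace2 sum_distrib_left)
    finally show ?thesis .
  qed
  have T2: "lap G (\<lambda>w. trace (matrix_inv (A w) ** G w)) z
      = (\<Sum>q\<in>UNIV. \<Sum>p\<in>UNIV. Gi $ q $ p * trace (L q p))"
    unfolding lap_def using lap_term[OF z] by (simp add: L_def Ai_def Gi_def ginv_def)
  have T3: "(\<Sum>q\<in>UNIV. \<Sum>p\<in>UNIV. \<Sum>g\<in>UNIV. \<Sum>m\<in>UNIV. \<Sum>j\<in>UNIV.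
            ginv G z $ q $ p * matrix_inv (matrix_inv (A z) ** G z) $ g $ m
            * nabla_end A (\<lambda>w. matrix_inv (A w) ** G w) q m j z
            * nablabar_end (\<lambda>w. matrix_inv (A w) ** G w) p j g z)
      = (\<Sum>q\<in>UNIV. \<Sum>p\<in>UNIV. Gi $ q $ p * trace (Gi ** A z ** N q ** Nb p))"
    unfolding trace3 nabla_mat[OF z] nablabar_mat[OF z] Ai_def[symmetric] Hinv
    by (simp add: N_def Nb_def Gi_def ginv_def sum_distrib_left mult_ac)
  have T4: "(\<Sum>q\<in>UNIV. \<Sum>p\<in>UNIV. \<Sum>a\<in>UNIV. \<Sum>j\<in>UNIV.
            ginv G z $ q $ p * curv A p q a j z * (matrix_inv (A z) ** G z) $ j $ a)
      = (\<Sum>q\<in>UNIV. \<Sum>p\<in>UNIV. Gi $ q $ p * trace (CA p q ** (Ai ** G z)))"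
    unfolding trace2 curv_mat[OF U gA z] Ai_def[symmetric]
    by (simp add: CA_def Gi_def ginv_def sum_distrib_left mult_ac)
  have "(\<Sum>q\<in>UNIV. \<Sum>p\<in>UNIV. Gi $ q $ p * trace (Ai ** R q p)) + (\<Sum>q\<in>UNIV. \<Sum>p\<in>UNIV. Gi $ q $ p * trace (L q p))
     = (\<Sum>q\<in>UNIV. \<Sum>p\<in>UNIV. Gi $ q $ p * trace (Gi ** A z ** N q ** Nb p))
       + (\<Sum>q\<in>UNIV. \<Sum>p\<in>UNIV. Gi $ q $ p * trace (CA p q ** (Ai ** G z)))"
    by (simp add: sum.distrib[symmetric] distrib_left[symmetric] key)
  then show ?thesis unfolding T1 T2 T3 T4 by (simp add: algebra_simps)
qed

end

lemma lin_comb: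
  fixes V a b c l r1 r2 :: complex
  assumes h1: "V = - a - b / 2 - c" and h2: "- a - l = - r1 - r2"
  shows "V - l = - r1 - r2 - b / 2 - c"
proof -
  have "V - l = (- a - l) - b / 2 - c" by (simp add: h1 algebra_simps)
  also have "\<dots> = - r1 - r2 - b / 2 - c" by (simp only: h2)
  finally show ?thesis .
qed

theorem proposition1:
  fixes U :: "(complex^'n) set"
    and g :: "real \<Rightarrow> complex^'n \<Rightarrow> complex^'n^'n"
    and t0 :: real
    and \<Phi> :: "complex^'n \<Rightarrow> complex^'n^'n \<Rightarrow> complex^'n^'n"
  assumes U_open: "open U"
    and t0_pos: "0 < t0"
    and g_smooth: "smooth_on ({0..t0} \<times> U) (\<lambda>(t, z). g t z)"
    and g_metric: "\<And>t z. t \<in> {0..t0} \<Longrightarrow> z \<in> U \<Longrightarrow> pos_def_herm (g t z)"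
    and \<Phi>_smooth: "smooth_on (U \<times> {A. pos_def_herm (herm_part A)}) (\<lambda>(z, A). \<Phi> z (herm_part A))"
    and \<Phi>_real: "\<And>z A. z \<in> U \<Longrightarrow> pos_def_herm A \<Longrightarrow> hermitian_mat (\<Phi> z A)"
    and flow: "\<And>t z k j. t \<in> {0..t0} \<Longrightarrow> z \<in> U \<Longrightarrow>
       ((\<lambda>s. g s z $ k $ j) has_vector_derivative
          (- ricci2 (g t) k j z - TT (g t) k j z / 2 - \<Phi> z (g t z) $ k $ j))
         (at t within {0..t0})"
  shows "\<forall>t\<in>{0..t0}. \<forall>z\<in>U.
     (let h = (\<lambda>s w. matrix_inv (g 0 w) ** g s w) in
       vector_derivative (\<lambda>s. trace (h s z)) (at t within {0..t0})
         - lap (g t) (\<lambda>w. trace (h t w)) z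
       = - (\<Sum>q\<in>UNIV. \<Sum>p\<in>UNIV. \<Sum>\<gamma>\<in>UNIV. \<Sum>\<mu>\<in>UNIV. \<Sum>j\<in>UNIV.
              ginv (g t) z $ q $ p * matrix_inv (h t z) $ \<gamma> $ \<mu>
              * nabla_end (g 0) (h t) q \<mu> j z * nablabar_end (h t) p j \<gamma> z)
         - (\<Sum>q\<in>UNIV. \<Sum>p\<in>UNIV. \<Sum>\<alpha>\<in>UNIV. \<Sum>j\<in>UNIV.
              ginv (g t) z $ q $ p * curv (g 0) p q \<alpha> j z * h t z $ j $ \<alpha>)
         - (\<Sum>j\<in>UNIV. \<Sum>k\<in>UNIV. ginv (g 0) z $ j $ k * TT (g t) k j z) / 2
         - (\<Sum>j\<in>UNIV. \<Sum>k\<in>UNIV. ginv (g 0) z $ j $ k * \<Phi> z (g t z) $ k $ j))"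
proof (intro ballI)
  fix t z assume t: "t \<in> {0..t0}" and z: "z \<in> U"
  have t00: "0 \<in> {0..t0}" using t0_pos by simp
  have good: "goodM U (g s)" if s: "s \<in> {0..t0}" for s
    unfolding goodM_def
    using good_slice[OF g_smooth U_open s] posdef_invertible g_metric[OF s] by blast
  define Ai where "Ai = matrix_inv (g 0 z)"
  define F where "F k j = - ricci2 (g t) k j z - TT (g t) k j z / 2 - \<Phi> z (g t z) $ k $ j" for k j
  have tr: "trace (Ai ** g s z) = (\<Sum>j\<in>UNIV. \<Sum>k\<in>UNIV. Ai $ j $ k * g s z $ k $ j)" for s
    by (rule trace2)
  have hd: "((\<lambda>s. trace (Ai ** g s z)) has_vector_derivative (\<Sum>j\<in>UNIV. \<Sum>k\<in>UNIV. Ai $ j $ k * F k j))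
      (at t within {0..t0})"
    unfolding tr F_def
    by (intro has_vector_derivative_sum ballI has_vector_derivative_mult_right flow[OF t z])
  have vd: "vector_derivative (\<lambda>s. trace (Ai ** g s z)) (at t within {0..t0})
      = (\<Sum>j\<in>UNIV. \<Sum>k\<in>UNIV. Ai $ j $ k * F k j)"
    by (rule vector_derivative_within_closed_interval[OF t0_pos t hd])
  have split: "(\<Sum>j\<in>UNIV. \<Sum>k\<in>UNIV. Ai $ j $ k * F k j)
      = - (\<Sum>j\<in>UNIV. \<Sum>k\<in>UNIV. Ai $ j $ k * ricci2 (g t) k j z)
        - (\<Sum>j\<in>UNIV. \<Sum>k\<in>UNIV. Ai $ j $ k * TT (g t) k j z) / 2
        - (\<Sum>j\<in>UNIV. \<Sum>k\<in>UNIV. Ai $ j $ k * \<Phi> z (g t z) $ k $ j)"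
    by (simp add: F_def algebra_simps sum_subtractf sum_negf sum_divide_distrib sum.distrib)
  have ms: "- (\<Sum>j\<in>UNIV. \<Sum>k\<in>UNIV. ginv (g 0) z $ j $ k * ricci2 (g t) k j z)
       - lap (g t) (\<lambda>w. trace (matrix_inv (g 0 w) ** g t w)) z
     = - (\<Sum>q\<in>UNIV. \<Sum>p\<in>UNIV. \<Sum>g'\<in>UNIV. \<Sum>m\<in>UNIV. \<Sum>j\<in>UNIV.
            ginv (g t) z $ q $ p * matrix_inv (matrix_inv (g 0 z) ** g t z) $ g' $ m
            * nabla_end (g 0) (\<lambda>w. matrix_inv (g 0 w) ** g t w) q m j z
            * nablabar_end (\<lambda>w. matrix_inv (g 0 w) ** g t w) p j g' z)
       - (\<Sum>q\<in>UNIV. \<Sum>p\<in>UNIV. \<Sum>a\<in>UNIV. \<Sum>j\<in>UNIV.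
            ginv (g t) z $ q $ p * curv (g 0) p q a j z * (matrix_inv (g 0 z) ** g t z) $ j $ a)"
    by (rule main_space[OF U_open good[OF t00] good[OF t] z])
  show "let h = (\<lambda>s w. matrix_inv (g 0 w) ** g s w) in
       vector_derivative (\<lambda>s. trace (h s z)) (at t within {0..t0})
         - lap (g t) (\<lambda>w. trace (h t w)) z
       = - (\<Sum>q\<in>UNIV. \<Sum>p\<in>UNIV. \<Sum>\<gamma>\<in>UNIV. \<Sum>\<mu>\<in>UNIV. \<Sum>j\<in>UNIV.
              ginv (g t) z $ q $ p * matrix_inv (h t z) $ \<gamma> $ \<mu>
              * nabla_end (g 0) (h t) q \<mu> j z * nablabar_end (h t) p j \<gamma> z)
         - (\<Sum>q\<in>UNIV. \<Sum>p\<in>UNIV. \<Sum>\<alpha>\<in>UNIV. \<Sum>j\<in>UNIV.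
              ginv (g t) z $ q $ p * curv (g 0) p q \<alpha> j z * h t z $ j $ \<alpha>)
         - (\<Sum>j\<in>UNIV. \<Sum>k\<in>UNIV. ginv (g 0) z $ j $ k * TT (g t) k j z) / 2
         - (\<Sum>j\<in>UNIV. \<Sum>k\<in>UNIV. ginv (g 0) z $ j $ k * \<Phi> z (g t z) $ k $ j)"
    unfolding Let_def
  proof (rule lin_comb[OF _ ms])
    show "vector_derivative (\<lambda>s. trace (matrix_inv (g 0 z) ** g s z)) (at t within {0..t0})
      = - (\<Sum>j\<in>UNIV. \<Sum>k\<in>UNIV. ginv (g 0) z $ j $ k * ricci2 (g t) k j z)
        - (\<Sum>j\<in>UNIV. \<Sum>k\<in>UNIV. ginv (g 0) z $ j $ k * TT (g t) k j z) / 2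
        - (\<Sum>j\<in>UNIV. \<Sum>k\<in>UNIV. ginv (g 0) z $ j $ k * \<Phi> z (g t z) $ k $ j)"
      using vd split unfolding Ai_def ginv_def by simp
  qed
qed

end
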